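(* Under the setting below, for every $x\in\mathbb R^d$ and every realization of the algorithm, $$\sum_{t\in\mathcal B}\gamma\big(f(x^t)-f(x)\big)+\sum_{t\in\mathcal N}\gamma\big(c-g(x)\big)\le\frac12\|x^0-x\|^2+\frac12\sum_{t=0}^{T-1}\gamma^2\|h^t\|^2+\sum_{t=0}^{T-1}\gamma^2\|h^t\|\,\|e^t\|+\sum_{t=0}^{T-1}\gamma\|h^t\|\,\|\hat e^t\|.$$
   Context: Problem: minimize $f(x)=\frac1n\sum_{i=1}^nf_i(x)$ subject to $g(x)=\frac1n\sum_{i=1}^ng_i(x)\le0$, with $f_i,g_i:\mathbb R^d\to\mathbb R$ convex. Compressors $\mathcal C_0,\mathcal C_1,\dots,\mathcal C_n$ are arbitrary (possibly randomized) maps $\mathbb R^d\to\mathbb R^d$. Safe-EF with bidirectional compression: given $x^0=w^0\in\mathbb R^d$, $\gamma,c>0$, $e_i^0=0$; for $t=0,\dots,T-1$: each worker sets $h_i^t=f_i'(x^t)\in\partial f_i(x^t)$ if $g(x^t)\le c$ and $h_i^t=g_i'(x^t)\in\partial g_i(x^t)$ otherwise; $v_i^t=\mathcal C_i(e_i^t+h_i^t)$; $e_i^{t+1}=e_i^t+h_i^t-v_i^t$; $v^t=\frac1n\sum_iv_i^t$, $w^{t+1}=w^t-\gamma v^t$, $x^{t+1}=x^t+\mathcal C_0(w^{t+1}-x^t)$. Notation: $h^t=\frac1n\sum_ih_i^t$, $e^t=\frac1n\sum_ie_i^t$, $\hat e^t=w^t-x^t$, $\mathcal B=\{t\in\{0,\dots,T-1\}:g(x^t)\le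 c\}$, $\mathcal N=\{0,\dots,T-1\}\setminus\mathcal B$. *)

theory Defs
  imports "HOL-Analysis.Analysis"
begin

definition is_subgrad :: "('a::real_inner \<Rightarrow> real) \<Rightarrow> 'a \<Rightarrow> 'a \<Rightarrow> bool" where
  "is_subgrad \<phi> x s \<longleftrightarrow> (\<forall>y. \<phi> y \<ge> \<phi> x + inner s (y - x))"

definition avg_fun :: "nat \<Rightarrow> (nat \<Rightarrow> 'a \<Rightarrow> real) \<Rightarrow> 'a \<Rightarrow> real" where
  "avg_fun n F = (\<lambda>z. (1 / real n) * (\<Sum>i=1..n. F i z))"

definition avg_vec :: "nat \<Rightarrow> (nat \<Rightarrow> 'a::real_vector) \<Rightarrow> 'a" where
  "avg_vec n u = (1 / real n) *\<^sub>R (\<Sum>i=1..n. u i)"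

end

theory Submission
  imports Defs
begin

theorem mainTheorem7:
  fixes n T :: nat and \<gamma> c :: real
    and fi gi :: "nat \<Rightarrow> 'a::euclidean_space \<Rightarrow> real"
    and C :: "nat \<Rightarrow> nat \<Rightarrow> 'a \<Rightarrow> 'a"
    and x w :: "nat \<Rightarrow> 'a"
    and h e v :: "nat \<Rightarrow> nat \<Rightarrow> 'a"
    and z :: 'a
  assumes n_pos: "n \<ge> 1"
    and gamma_pos: "\<gamma> > 0" and c_pos: "c > 0"
    and conv_f: "\<And>i. i \<in> {1..n} \<Longrightarrow> convex_on UNIV (fi i)"
    and conv_g: "\<And>i. i \<in> {1..n} \<Longrightarrow> convex_on UNIV (gi i)"
    and init: "x 0 = w 0"
    and e_init: "\<And>i. i \<in> {1..n} \<Longrightarrow> e 0 i = 0"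
    and h_def: "\<And>t i. t < T \<Longrightarrow> i \<in> {1..n} \<Longrightarrow>
       (if avg_fun n gi (x t) \<le> c then is_subgrad (fi i) (x t) (h t i)
        else is_subgrad (gi i) (x t) (h t i))"
    and v_def: "\<And>t i. t < T \<Longrightarrow> i \<in> {1..n} \<Longrightarrow> v t i = C t i (e t i + h t i)"
    and e_step: "\<And>t i. t < T \<Longrightarrow> i \<in> {1..n} \<Longrightarrow> e (Suc t) i = e t i + h t i - v t i"
    and w_step: "\<And>t. t < T \<Longrightarrow> w (Suc t) = w t - \<gamma> *\<^sub>R avg_vec n (v t)"
    and x_step: "\<And>t. t < T \<Longrightarrow> x (Suc t) = x t + C t 0 (w (Suc t) - x t)"
  shows "(\<Sum>t\<in>{t. t < T \<and> avg_fun n gi (x t) \<le> c}.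
            \<gamma> * (avg_fun n fi (x t) - avg_fun n fi z))
       + (\<Sum>t\<in>{t. t < T \<and> \<not> avg_fun n gi (x t) \<le> c}. \<gamma> * (c - avg_fun n gi z))
       \<le> 1/2 * (norm (x 0 - z))\<^sup>2
         + 1/2 * (\<Sum>t<T. \<gamma>\<^sup>2 * (norm (avg_vec n (h t)))\<^sup>2)
         + (\<Sum>t<T. \<gamma>\<^sup>2 * norm (avg_vec n (h t)) * norm (avg_vec n (e t)))
         + (\<Sum>t<T. \<gamma> * norm (avg_vec n (h t)) * norm (w t - x t))"
proof -
  define H where "H t = avg_vec n (h t)" for t
  define E where "E t = avg_vec n (e t)" for t
  define V where "V t = avg_vec n (v t)" for t
  define f where "f = avg_fun n fi"
  define g where "g = avg_fun n gi"
  define y where "y t = w t - \<gamma> *\<^sub>R E t" for t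
  define D where "D t = 1/2 * (norm (y t - z))\<^sup>2" for t
  define R where "R t = 1/2 * (\<gamma>\<^sup>2 * (norm (H t))\<^sup>2) + \<gamma>\<^sup>2 * norm (H t) * norm (E t)
       + \<gamma> * norm (H t) * norm (w t - x t)" for t
  define \<phi> where "\<phi> t = (if g (x t) \<le> c then \<gamma> * (f (x t) - f z) else \<gamma> * (c - g z))" for t
  have E0: "E 0 = 0" unfolding E_def avg_vec_def using e_init by simp
  have Estep: "E (Suc t) = E t + H t - V t" if "t < T" for t
  proof -
    have "(\<Sum>i=1..n. e (Suc t) i) = (\<Sum>i=1..n. e t i + h t i - v t i)"
      using e_step[OF that] by (intro sum.cong) auto
    also have "\<dots> = (\<Sum>i=1..n. e t i) + (\<Sum>i=1..n. h t i) - (\<Sum>i=1..n. v t i)"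
      by (simp add: sum.distrib sum_subtractf)
    finally show ?thesis unfolding E_def H_def V_def avg_vec_def
      by (simp add: scaleR_diff_right scaleR_add_right)
  qed
  have ystep: "y (Suc t) = y t - \<gamma> *\<^sub>R H t" if "t < T" for t
    unfolding y_def w_step[OF that] Estep[OF that] V_def
    by (simp add: scaleR_diff_right scaleR_add_right algebra_simps)
  have y0: "y 0 = x 0" unfolding y_def using E0 init by simp
  have subg: "\<phi> t \<le> \<gamma> * inner (H t) (x t - z)" if "t < T" for t
  proof -
    have n0: "real n > 0" using n_pos by simp
    have key: "\<And>F. (\<And>i. i \<in> {1..n} \<Longrightarrow> is_subgrad (F i) (x t) (h t i)) \<Longrightarrow>
        avg_fun n F (x t) - avg_fun n F z \<le> inner (H t) (x t - z)"
    proof -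
      fix F assume A: "\<And>i. i \<in> {1..n} \<Longrightarrow> is_subgrad (F i) (x t) (h t i)"
      have "(\<Sum>i=1..n. F i (x t) - F i z) \<le> (\<Sum>i=1..n. inner (h t i) (x t - z))"
      proof (rule sum_mono)
        fix i assume "i \<in> {1..n}"
        then have "F i z \<ge> F i (x t) + inner (h t i) (z - x t)"
          using A unfolding is_subgrad_def by blast
        moreover have "inner (h t i) (z - x t) = - inner (h t i) (x t - z)"
          by (simp add: inner_diff_right)
        ultimately show "F i (x t) - F i z \<le> inner (h t i) (x t - z)" by linarith
      qed
      then have "(\<Sum>i=1..n. F i (x t)) - (\<Sum>i=1..n. F i z) \<le> inner (\<Sum>i=1..n. h t i) (x t - z)"
        by (simp add: sum_subtractf inner_sum_left)
      then have "(1/real n) * ((\<Sum>i=1..n. F i (x t)) - (\<Sum>i=1..n. F i z))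
           \<le> (1/real n) * inner (\<Sum>i=1..n. h t i) (x t - z)"
        using n0 by (intro mult_left_mono) auto
      then show "avg_fun n F (x t) - avg_fun n F z \<le> inner (H t) (x t - z)"
        unfolding avg_fun_def H_def avg_vec_def by (simp add: algebra_simps)
    qed
    show ?thesis
    proof (cases "g (x t) \<le> c")
      case True
      then have "\<And>i. i \<in> {1..n} \<Longrightarrow> is_subgrad (fi i) (x t) (h t i)"
        using h_def[OF that] unfolding g_def by auto
      from key[OF this] True gamma_pos show ?thesis unfolding \<phi>_def f_def
        by (simp add: mult_left_mono)
    next
      case False
      then have "\<And>i. i \<in> {1..n} \<Longrightarrow> is_subgrad (gi i) (x t) (h t i)"
        using h_def[OF that] unfolding g_def by auto
      from key[OF this] have "c - g z \<le> inner (H t) (x t - z)" using False unfolding g_def by linarith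
      with False gamma_pos show ?thesis unfolding \<phi>_def
        by (simp add: mult_left_mono)
    qed
  qed
  have step: "\<phi> t \<le> D t - D (Suc t) + R t" if "t < T" for t
  proof -
    define a where "a = y t - z"
    define u where "u = w t - x t"
    have ya: "y (Suc t) - z = a - \<gamma> *\<^sub>R H t" unfolding a_def using ystep[OF that] by simp
    have xa: "x t - z = a - u + \<gamma> *\<^sub>R E t" unfolding a_def u_def y_def by (simp add: algebra_simps)
    have nsq: "(norm (a - \<gamma> *\<^sub>R H t))\<^sup>2 = (norm a)\<^sup>2 - 2 * \<gamma> * inner (H t) a + \<gamma>\<^sup>2 * (norm (H t))\<^sup>2"
      unfolding power2_norm_eq_inner
      by (simp add: inner_diff_left inner_diff_right inner_commute power2_eq_square algebra_simps)
    have ip: "inner (H t) (x t - z) = inner (H t) a - inner (H t) u + \<gamma> * inner (H t) (E t)"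
      unfolding xa by (simp add: inner_diff_right inner_add_right)
    have c1: "- inner (H t) u \<le> norm (H t) * norm u"
      using Cauchy_Schwarz_ineq2[of "H t" u] by linarith
    have c2: "inner (H t) (E t) \<le> norm (H t) * norm (E t)" by (rule norm_cauchy_schwarz)
    have "\<gamma> * inner (H t) (x t - z) = \<gamma> * inner (H t) a + \<gamma> * (- inner (H t) u) + \<gamma>\<^sup>2 * inner (H t) (E t)"
      unfolding ip by (simp add: algebra_simps power2_eq_square)
    also have "\<dots> \<le> \<gamma> * inner (H t) a + \<gamma> * (norm (H t) * norm u) + \<gamma>\<^sup>2 * (norm (H t) * norm (E t))"
      using c1 c2 gamma_pos by (intro add_mono mult_left_mono) auto
    also have "\<dots> = D t - D (Suc t) + R t"
      unfolding D_def R_def ya nsq a_def[symmetric] u_def[symmetric] by (simp add: algebra_simps)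
    finally show ?thesis using subg[OF that] by linarith
  qed
  have lhs: "(\<Sum>t\<in>{t. t < T \<and> avg_fun n gi (x t) \<le> c}. \<gamma> * (avg_fun n fi (x t) - avg_fun n fi z))
       + (\<Sum>t\<in>{t. t < T \<and> \<not> avg_fun n gi (x t) \<le> c}. \<gamma> * (c - avg_fun n gi z)) = (\<Sum>t<T. \<phi> t)"
  proof -
    have "(\<Sum>t<T. \<phi> t) = (\<Sum>t\<in>{..<T} \<inter> {t. g (x t) \<le> c}. \<gamma> * (f (x t) - f z))
        + (\<Sum>t\<in>{..<T} \<inter> - {t. g (x t) \<le> c}. \<gamma> * (c - g z))"
      unfolding \<phi>_def by (rule sum.If_cases) simp
    moreover have "{..<T} \<inter> {t. g (x t) \<le> c} = {t. t < T \<and> avg_fun n gi (x t) \<le> c}" unfolding g_def by auto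
    moreover have "{..<T} \<inter> - {t. g (x t) \<le> c} = {t. t < T \<and> \<not> avg_fun n gi (x t) \<le> c}" unfolding g_def by auto
    ultimately show ?thesis unfolding f_def g_def by simp
  qed
  have "(\<Sum>t<T. \<phi> t) \<le> (\<Sum>t<T. D t - D (Suc t) + R t)" by (rule sum_mono) (use step in auto)
  also have "\<dots> = D 0 - D T + (\<Sum>t<T. R t)"
    by (simp add: sum.distrib sum_lessThan_telescope')
  also have "\<dots> \<le> D 0 + (\<Sum>t<T. R t)" unfolding D_def by simp
  finally have main: "(\<Sum>t<T. \<phi> t) \<le> D 0 + (\<Sum>t<T. R t)" .
  have "(\<Sum>t<T. R t) = 1/2 * (\<Sum>t<T. \<gamma>\<^sup>2 * (norm (avg_vec n (h t)))\<^sup>2)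
         + (\<Sum>t<T. \<gamma>\<^sup>2 * norm (avg_vec n (h t)) * norm (avg_vec n (e t)))
         + (\<Sum>t<T. \<gamma> * norm (avg_vec n (h t)) * norm (w t - x t))"
    unfolding R_def H_def E_def by (simp add: sum.distrib sum_distrib_left)
  moreover have "D 0 = 1/2 * (norm (x 0 - z))\<^sup>2" unfolding D_def y0 ..
  ultimately show ?thesis using main lhs by linarith
qed

end
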